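(* Let $G$ be a finite simple graph on a vertex set $V$ with $|V|=n\ge2$, and let $k\ge1$. Let $\mathscr A=\{I(K_n\setminus e)\}^{*\infty}\cup\{I(K_n)\}$ (graphs on $V$), and let $\mathscr W_k=\mathscr A+\dots+\mathscr A+\{I(K_n)\}$ with $k-1$ summands $\mathscr A$ (so $\mathscr W_1=\{I(K_n)\}$). Then $G$ has a proper edge colouring with $k$ colours if and only if there exists $H\in\{I(G)\}*\mathscr W_k$ such that for every $a\in\{1,\dots,k\}$ every element of $s(\{I(U_a(H))\}*\{I(K_{1,n-1})\})$ is at most $1$.
   Context: Take $R=\mathbb{Z}$ (or $\mathbb R$). An $R$-weighted complete graph $K$ is a finite vertex set with a weight $v_K(e)\in R$ on every 2-subset $e$. For such $H,G'$ with equal vertex counts and a bijection $f:V(H)\to V(G')$, $H*_fG'$ has vertex set $V(H)$ and weights $v_H(\{x,y\})v_{G'}(\{f(x),f(y)\})$; $H*G'=\{H*_fG': f \text{ bijection}\}$, and for sets $\mathscr H*\mathscr G=\bigcup_{H\in\mathscr H,G'\in\mathscr G}H*G'$. $s(K)=\sum_e v_K(e)$, $s(\mathscr K)=\{s(K):K\in\mathscr K\}$. For weighted complete graphs $H_1,H_2$ on the same vertex set, $H_1+H_2$ has weights $v_{H_1}+v_{H_2}$; for sets on a common vertex set, $\mathscr H_1+\mathscr H_2=\{H_1+H_2\}$. For a set $\mathscr X$, $\mathscr X^{*1}=\mathscr X$, $\mathscr X^{*(m+1)}=\mathscr X^{*m}*\mathscr X$; if there is $N$ with $\mathscr X^{*m}=\mathscr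 X^{*N}$ for all $m\ge N$, then $\mathscr X^{*\infty}:=\mathscr X^{*N}$ (this exists for $\mathscr X=\{I(K_n\setminus e)\}$). $K_n\setminus e$ is the complete graph on $V$ with one edge removed. For a simple graph $G$, $I(G)$ has weight $1$ on edges and $0$ on non-edges. For $a\in R$ and a weighted complete graph $H$, $U_a(H)$ is the unweighted graph on $V(H)$ whose edges are the pairs $e$ with $v_H(e)=a$. *)

theory Defs
  imports Main
begin

text \<open>Weighted complete graphs on a fixed finite vertex set V are represented as
  functions from 2-subsets of V to int, normalised to 0 outside the 2-subsets of V.\<close>

type_synonym 'a wgraph = "'a set \<Rightarrow> int"

definition edges2 :: "'a set \<Rightarrow> 'a set set" where
  "edges2 V = {e. e \<subseteq> V \<and> card e = 2}"

definition indic :: "'a set \<Rightarrow> 'a set set \<Rightarrow> 'a wgraph" where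
  "indic V E = (\<lambda>e. if e \<in> edges2 V \<and> e \<in> E then 1 else 0)"

definition wstar :: "'a set \<Rightarrow> ('a \<Rightarrow> 'a) \<Rightarrow> 'a wgraph \<Rightarrow> 'a wgraph \<Rightarrow> 'a wgraph" where
  "wstar V f H G = (\<lambda>e. if e \<in> edges2 V then H e * G (f ` e) else 0)"

definition wstar_set :: "'a set \<Rightarrow> 'a wgraph set \<Rightarrow> 'a wgraph set \<Rightarrow> 'a wgraph set" where
  "wstar_set V HH GG = {wstar V f H G | f H G. H \<in> HH \<and> G \<in> GG \<and> bij_betw f V V}"

definition wplus_set :: "'a set \<Rightarrow> 'a wgraph set \<Rightarrow> 'a wgraph set \<Rightarrow> 'a wgraph set" where
  "wplus_set V HH GG = {(\<lambda>e. H e + G e) | H G. H \<in> HH \<and> G \<in> GG}"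

definition wsum :: "'a set \<Rightarrow> 'a wgraph \<Rightarrow> int" where
  "wsum V K = (\<Sum>e\<in>edges2 V. K e)"

text \<open>wpow V X m is X^{*(m+1)}\<close>
fun wpow :: "'a set \<Rightarrow> 'a wgraph set \<Rightarrow> nat \<Rightarrow> 'a wgraph set" where
  "wpow V X 0 = X"
| "wpow V X (Suc m) = wstar_set V (wpow V X m) X"

definition wpow_inf :: "'a set \<Rightarrow> 'a wgraph set \<Rightarrow> 'a wgraph set" where
  "wpow_inf V X = (THE Y. \<exists>N. Y = wpow V X N \<and> (\<forall>m\<ge>N. wpow V X m = wpow V X N))"

definition U :: "'a set \<Rightarrow> int \<Rightarrow> 'a wgraph \<Rightarrow> 'a set set" where
  "U V a H = {e \<in> edges2 V. H e = a}"

definition star_edges :: "'a set \<Rightarrow> 'a \<Rightarrow> 'a set set" where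
  "star_edges V c = {{c, v} | v. v \<in> V \<and> v \<noteq> c}"

text \<open>W_k = A + ... + A + {I(K_n)} with k-1 summands A: Wk V A (k-1)\<close>
fun Wk :: "'a set \<Rightarrow> 'a wgraph set \<Rightarrow> nat \<Rightarrow> 'a wgraph set" where
  "Wk V A 0 = {indic V (edges2 V)}"
| "Wk V A (Suc m) = wplus_set V A (Wk V A m)"

definition proper_edge_colouring :: "'a set set \<Rightarrow> nat \<Rightarrow> ('a set \<Rightarrow> nat) \<Rightarrow> bool" where
  "proper_edge_colouring E k col \<longleftrightarrow>
     (\<forall>e\<in>E. col e \<in> {1..k}) \<and>
     (\<forall>e1\<in>E. \<forall>e2\<in>E. e1 \<noteq> e2 \<and> e1 \<inter> e2 \<noteq> {} \<longrightarrow> col e1 \<noteq> col e2)"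

end

theory Submission imports Defs "HOL-Combinatorics.Permutations" begin
lemma finite_edges2: "finite V \<Longrightarrow> finite (edges2 V)"
  unfolding edges2_def by (rule finite_subset[of _ "Pow V"]) auto

lemma edge_img:
  assumes "bij_betw f V V" "e \<in> edges2 V" shows "f ` e \<in> edges2 V"
proof -
  have eV: "e \<subseteq> V" and c: "card e = 2" using assms(2) by (auto simp: edges2_def)
  have "inj_on f e" using inj_on_subset[OF bij_betw_imp_inj_on[OF assms(1)] eV] .
  hence "card (f ` e) = 2" using c by (simp add: card_image)
  moreover have "f ` e \<subseteq> V" using image_mono[OF eV, of f] bij_betw_imp_surj_on[OF assms(1)] by simp
  ultimately show ?thesis unfolding edges2_def by simp
qed

lemma wstar_indic:
  assumes "bij_betw f V V"
  shows "wstar V f (indic V (edges2 V - F)) (indic V (edges2 V - {e0}))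
       = indic V (edges2 V - (F \<union> {e\<in>edges2 V. f ` e = e0}))"
proof (rule ext)
  fix e show "wstar V f (indic V (edges2 V - F)) (indic V (edges2 V - {e0})) e
       = indic V (edges2 V - (F \<union> {e\<in>edges2 V. f ` e = e0})) e"
  proof (cases "e \<in> edges2 V")
    case True
    then have "f ` e \<in> edges2 V" by (rule edge_img[OF assms])
    then show ?thesis using True unfolding wstar_def indic_def
      by (cases "e \<in> F"; cases "f ` e = e0") simp_all
  next
    case False then show ?thesis by (simp add: wstar_def indic_def)
  qed
qed
lemma pre_card:
  assumes "bij_betw f V V" shows "card {e\<in>edges2 V. f ` e = e0} \<le> 1"
proof -
  have i: "inj_on ((`) f) (Pow V)" using assms by (simp add: bij_betw_def inj_on_image_Pow)
  have "\<forall>a\<in>{e\<in>edges2 V. f ` e = e0}. \<forall>b\<in>{e\<in>edges2 V. f ` e = e0}. a = b"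
  proof (intro ballI)
    fix a b assume "a \<in> {e\<in>edges2 V. f ` e = e0}" "b \<in> {e\<in>edges2 V. f ` e = e0}"
    hence p: "a \<in> Pow V" "b \<in> Pow V" "f ` a = f ` b" unfolding edges2_def by auto
    show "a = b" using inj_onD[OF i p(3) p(1) p(2)] .
  qed
  hence h: "\<forall>a\<in>{e\<in>edges2 V. f ` e = e0}. \<forall>b\<in>{e\<in>edges2 V. f ` e = e0}. a = b" .
  show ?thesis
  proof (cases "finite {e\<in>edges2 V. f ` e = e0}")
    case True
    show ?thesis unfolding One_nat_def card_le_Suc0_iff_eq[OF True] using h .
  qed simp
qed

definition P where "P V e0 m = {indic V (edges2 V - F) | F. e0 \<in> F \<and> F \<subseteq> edges2 V \<and> card F \<le> Suc m}"

lemma map_edge: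
  assumes "e \<in> edges2 V" "e0 \<in> edges2 V"
  shows "\<exists>f. f permutes V \<and> f ` e = e0"
proof -
  obtain a b where e: "e = {a,b}" "a \<noteq> b" "a \<in> V" "b \<in> V" using assms(1)
    unfolding edges2_def by (auto simp: card_2_iff)
  obtain c d where e0: "e0 = {c,d}" "c \<noteq> d" "c \<in> V" "d \<in> V" using assms(2)
    unfolding edges2_def by (auto simp: card_2_iff)
  define g1 where "g1 = transpose a c"
  define g2 where "g2 = transpose (g1 b) d"
  have p1: "g1 permutes V" unfolding g1_def using e e0 by (simp add: permutes_swap_id)
  have "g1 b \<in> V" using e(4) by (simp add: permutes_in_image[OF p1])
  hence p2: "g2 permutes V" unfolding g2_def using e0 by (simp add: permutes_swap_id)
  have "g1 a = c" unfolding g1_def by simp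
  have "g1 b \<noteq> c" using e unfolding g1_def by (auto simp: transpose_def)
  hence "g2 c = c" using e0 unfolding g2_def by (auto simp: transpose_def)
  moreover have "g2 (g1 b) = d" unfolding g2_def by simp
  ultimately have "(g2 \<circ> g1) ` e = e0" using \<open>g1 a = c\<close> by (simp add: e(1) e0(1))
  thus ?thesis using permutes_compose[OF p1 p2] by blast
qed

lemma wpow_eq:
  assumes "e0 \<in> edges2 V" "finite V"
  shows "wpow V {indic V (edges2 V - {e0})} m = P V e0 m"
proof (induction m)
  case 0
  show ?case
  proof
    show "wpow V {indic V (edges2 V - {e0})} 0 \<subseteq> P V e0 0"
      using assms unfolding P_def by (auto intro!: exI[of _ "{e0}"])
    show "P V e0 0 \<subseteq> wpow V {indic V (edges2 V - {e0})} 0"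
    proof
      fix x assume "x \<in> P V e0 0"
      then obtain F where F: "x = indic V (edges2 V - F)" "e0 \<in> F" "F \<subseteq> edges2 V" "card F \<le> Suc 0"
        unfolding P_def by blast
      have fin: "finite F" using F(3) finite_edges2[OF assms(2)] finite_subset by blast
      have "\<forall>a\<in>F. \<forall>b\<in>F. a = b" using card_le_Suc0_iff_eq[OF fin] F(4) by blast
      hence "F = {e0}" using F(2) by blast
      thus "x \<in> wpow V {indic V (edges2 V - {e0})} 0" using F by simp
    qed
  qed
next
  case (Suc m)
  show ?case
  proof
    show "wpow V {indic V (edges2 V - {e0})} (Suc m) \<subseteq> P V e0 (Suc m)"
    proof
      fix x assume "x \<in> wpow V {indic V (edges2 V - {e0})} (Suc m)"
      hence "x \<in> wstar_set V (P V e0 m) {indic V (edges2 V - {e0})}" using Suc.IH by simp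
      then obtain f H where x: "x = wstar V f H (indic V (edges2 V - {e0}))"
        "H \<in> P V e0 m" "bij_betw f V V"
        unfolding wstar_set_def by blast
      then obtain F where F: "H = indic V (edges2 V - F)" "e0 \<in> F" "F \<subseteq> edges2 V" "card F \<le> Suc m"
        unfolding P_def by blast
      have "card (F \<union> {e\<in>edges2 V. f ` e = e0}) \<le> card F + card {e\<in>edges2 V. f ` e = e0}"
        by (rule card_Un_le)
      also have "\<dots> \<le> Suc (Suc m)" using pre_card[OF x(3), of e0] F by linarith
      finally have cc: "card (F \<union> {e\<in>edges2 V. f ` e = e0}) \<le> Suc (Suc m)" .
      have x': "x = indic V (edges2 V - (F \<union> {e\<in>edges2 V. f ` e = e0}))"
        unfolding x(1) F(1) by (rule wstar_indic[OF x(3)])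
      have "e0 \<in> F \<union> {e\<in>edges2 V. f ` e = e0}" using F(2) by blast
      moreover have "F \<union> {e\<in>edges2 V. f ` e = e0} \<subseteq> edges2 V" using F(3) by blast
      ultimately show "x \<in> P V e0 (Suc m)" unfolding P_def using x' cc by blast
    qed
    show "P V e0 (Suc m) \<subseteq> wpow V {indic V (edges2 V - {e0})} (Suc m)"
    proof
      fix x assume "x \<in> P V e0 (Suc m)"
      then obtain F where F: "x = indic V (edges2 V - F)" "e0 \<in> F" "F \<subseteq> edges2 V" "card F \<le> Suc (Suc m)"
        unfolding P_def by blast
      show "x \<in> wpow V {indic V (edges2 V - {e0})} (Suc m)"
      proof (cases "F = {e0}")
        case True
        have "indic V (edges2 V - {e0}) \<in> P V e0 m" unfolding P_def
          by (rule CollectI, rule exI[where x="{e0}"]) (use assms(1) in simp)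
        moreover have "bij_betw id V V" by simp
        moreover have "x = wstar V id (indic V (edges2 V - {e0})) (indic V (edges2 V - {e0}))"
          unfolding wstar_indic[OF \<open>bij_betw id V V\<close>] F(1) True
          by (rule arg_cong[where f="\<lambda>F. indic V (edges2 V - F)"]) (use assms(1) in auto)
        ultimately have "x \<in> wstar_set V (P V e0 m) {indic V (edges2 V - {e0})}"
          unfolding wstar_set_def
          by (intro CollectI exI[where x=id]) (rule exI[where x="indic V (edges2 V - {e0})"], rule exI[where x="indic V (edges2 V - {e0})"], simp)
        thus ?thesis using Suc.IH by simp
      next
        case False
        then obtain e where e: "e \<in> F" "e \<noteq> e0" using F by blast
        have fin: "finite F" using F(3) finite_edges2[OF assms(2)] finite_subset by blast
        have "card (F - {e}) \<le> Suc m" using F(4) e fin by (simp add: card_Diff_singleton)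
        hence H: "indic V (edges2 V - (F - {e})) \<in> P V e0 m" using F e unfolding P_def by blast
        obtain f where f: "f permutes V" "f ` e = e0" using map_edge[OF _ assms(1), of e] e F by blast
        have bf: "bij_betw f V V" using f(1) by (rule permutes_imp_bij)
        have ie: "f ` e' = e0 \<longleftrightarrow> e' = e" for e'
          using inj_image_eq_iff[OF permutes_inj[OF f(1)], of e' e] f(2) by simp
        have eE: "e \<in> edges2 V" using subsetD[OF F(3) e(1)] .
        have "{e'\<in>edges2 V. f ` e' = e0} = {e}" unfolding ie using eE by blast
        moreover have "F - {e} \<union> {e} = F" using e(1) by blast
        ultimately have "x = wstar V f (indic V (edges2 V - (F - {e}))) (indic V (edges2 V - {e0}))"
          unfolding wstar_indic[OF bf] F(1) by simp
        hence "x \<in> wstar_set V (P V e0 m) {indic V (edges2 V - {e0})}"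
          unfolding wstar_set_def using H bf
          by (intro CollectI exI[where x=f]) (rule exI[where x="indic V (edges2 V - (F - {e}))"], rule exI[where x="indic V (edges2 V - {e0})"], simp)
        thus ?thesis using Suc.IH by simp
      qed
    qed
  qed
qed

definition Pall where "Pall V e0 = {indic V (edges2 V - F) | F. e0 \<in> F \<and> F \<subseteq> edges2 V}"

lemma P_stable:
  assumes "finite V" "card (edges2 V) \<le> m"
  shows "P V e0 m = Pall V e0"
proof
  show "P V e0 m \<subseteq> Pall V e0" unfolding P_def Pall_def by blast
  show "Pall V e0 \<subseteq> P V e0 m"
  proof
    fix x assume "x \<in> Pall V e0"
    then obtain F where F: "x = indic V (edges2 V - F)" "e0 \<in> F" "F \<subseteq> edges2 V"
      unfolding Pall_def by blast
    have "card F \<le> card (edges2 V)" using card_mono[OF finite_edges2[OF assms(1)] F(3)] .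
    hence "card F \<le> Suc m" using assms(2) by linarith
    thus "x \<in> P V e0 m" unfolding P_def using F by blast
  qed
qed

lemma wpow_inf_eq:
  assumes "finite V" "e0 \<in> edges2 V"
  shows "wpow_inf V {indic V (edges2 V - {e0})} = Pall V e0"
proof -
  let ?X = "{indic V (edges2 V - {e0})}"
  let ?N = "card (edges2 V)"
  have st: "wpow V ?X m = Pall V e0" if "?N \<le> m" for m
    using wpow_eq[OF assms(2,1)] P_stable[OF assms(1) that] by simp
  show ?thesis unfolding wpow_inf_def
  proof (rule the_equality)
    have s1: "Pall V e0 = wpow V ?X ?N" using st[of ?N] by simp
    have s2: "\<forall>m\<ge>?N. wpow V ?X m = wpow V ?X ?N" using st by simp
    show "\<exists>N. Pall V e0 = wpow V ?X N \<and> (\<forall>m\<ge>N. wpow V ?X m = wpow V ?X N)"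
      using s1 s2 by blast
    fix Y assume "\<exists>N. Y = wpow V ?X N \<and> (\<forall>m\<ge>N. wpow V ?X m = wpow V ?X N)"
    then obtain N where N: "Y = wpow V ?X N" "\<forall>m\<ge>N. wpow V ?X m = wpow V ?X N" by blast
    have "wpow V ?X (max N ?N) = wpow V ?X N" using N(2) max.cobounded1 by blast
    hence "Y = wpow V ?X (max N ?N)" using N(1) by simp
    also have "\<dots> = Pall V e0" using st[of "max N ?N"] by simp
    finally show "Y = Pall V e0" .
  qed
qed

lemma Wk_vals:
  assumes "\<forall>H\<in>A. \<exists>S. H = indic V S" "W \<in> Wk V A j" "e \<in> edges2 V"
  shows "1 \<le> W e \<and> W e \<le> int j + 1"
  using assms(2)
proof (induction j arbitrary: W)
  case 0
  then show ?case using assms(3) by (simp add: indic_def)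
next
  case (Suc j)
  then obtain H G where HG: "W = (\<lambda>e. H e + G e)" "H \<in> A" "G \<in> Wk V A j"
    by (auto simp: wplus_set_def)
  obtain S where "H = indic V S" using assms(1) HG(2) by blast
  hence "H e = 0 \<or> H e = 1" unfolding indic_def by simp
  moreover have "1 \<le> G e \<and> G e \<le> int j + 1" using Suc.IH[OF HG(3)] .
  ultimately show ?case unfolding HG(1) by auto
qed

lemma Wk_exists:
  assumes "e0 \<in> edges2 V" "Pall V e0 \<subseteq> A"
    "\<forall>e\<in>edges2 V. 1 \<le> T e \<and> T e \<le> int j + 1" "T e0 = 1"
  shows "(\<lambda>e. if e \<in> edges2 V then T e else 0) \<in> Wk V A j"
  using assms(3,4)
proof (induction j arbitrary: T)
  case 0
  have "(\<lambda>e. if e \<in> edges2 V then T e else 0) = indic V (edges2 V)"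
  proof (rule ext)
    fix e show "(if e \<in> edges2 V then T e else 0) = indic V (edges2 V) e"
    proof (cases "e \<in> edges2 V")
      case True
      have "1 \<le> T e \<and> T e \<le> int 0 + 1" using "0.prems"(1) True by blast
      hence "T e = 1" by linarith
      then show ?thesis using True unfolding indic_def by simp
    next
      case False then show ?thesis unfolding indic_def by simp
    qed
  qed
  then show ?case by simp
next
  case (Suc j)
  define F where "F = {e \<in> edges2 V. T e \<le> int j + 1}"
  define a where "a = indic V (edges2 V - F)"
  define T' where "T' = (\<lambda>e. min (T e) (int j + 1))"
  have "e0 \<in> F" unfolding F_def using assms(1) Suc.prems(2) by simp
  moreover have fF: "F \<subseteq> edges2 V" unfolding F_def by blast
  ultimately have "a \<in> Pall V e0" unfolding Pall_def a_def by blast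
  hence aA: "a \<in> A" using assms(2) by blast
  have "\<forall>e\<in>edges2 V. 1 \<le> T' e \<and> T' e \<le> int j + 1"
  proof
    fix e assume "e \<in> edges2 V"
    hence "1 \<le> T e" using Suc.prems(1) by blast
    thus "1 \<le> T' e \<and> T' e \<le> int j + 1" unfolding T'_def by linarith
  qed
  moreover have "T' e0 = 1" using Suc.prems(2) unfolding T'_def by simp
  ultimately have W': "(\<lambda>e. if e \<in> edges2 V then T' e else 0) \<in> Wk V A j" by (rule Suc.IH)
  have eq: "(\<lambda>e. if e \<in> edges2 V then T e else 0) = (\<lambda>e. a e + (if e \<in> edges2 V then T' e else 0))"
  proof (rule ext)
    fix e show "(if e \<in> edges2 V then T e else 0) = a e + (if e \<in> edges2 V then T' e else 0)"
    proof (cases "e \<in> edges2 V")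
      case True
      then have b: "1 \<le> T e \<and> T e \<le> int (Suc j) + 1" using Suc.prems(1) by blast
      show ?thesis
      proof (cases "T e \<le> int j + 1")
        case c: True
        hence "e \<in> F" unfolding F_def using True by simp
        hence "a e = 0" unfolding a_def indic_def by simp
        moreover have "T' e = T e" unfolding T'_def using c by simp
        ultimately show ?thesis using True by simp
      next
        case c: False
        hence "e \<notin> F" unfolding F_def by simp
        hence "a e = 1" unfolding a_def indic_def using True by simp
        moreover have "T' e = int j + 1" unfolding T'_def using c by simp
        moreover have "T e = int j + 2" using b c by simp
        ultimately show ?thesis using True by simp
      qed
    next
      case False then show ?thesis unfolding a_def indic_def by simp
    qed
  qed
  have "(\<lambda>e. a e + (if e \<in> edges2 V then T' e else 0)) \<in> wplus_set V A (Wk V A j)"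
    unfolding wplus_set_def
    by (rule CollectI, rule exI[where x=a], rule exI[where x="\<lambda>e. if e \<in> edges2 V then T' e else 0"], simp add: aA W')
  then show ?case unfolding eq by simp
qed

lemma star_iff:
  assumes "bij_betw f V V" "e \<in> edges2 V" "u \<in> V" "f u = c"
  shows "f ` e \<in> star_edges V c \<longleftrightarrow> u \<in> e"
proof
  have inj: "inj_on f V" using assms(1) by (rule bij_betw_imp_inj_on)
  have eV: "e \<subseteq> V" using assms(2) unfolding edges2_def by simp
  {
    assume "f ` e \<in> star_edges V c"
    then obtain v where "f ` e = {c, v}" unfolding star_edges_def by blast
    then obtain x where x: "x \<in> e" "f x = c" by (metis imageE insertI1)
    have "x = u" using inj_onD[OF inj _ subsetD[OF eV x(1)] assms(3)] x(2) assms(4) by simp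
    then show "u \<in> e" using x(1) by simp
  }
  {
    assume u: "u \<in> e"
    obtain p q where pq: "e = {p, q}" "p \<noteq> q" using assms(2) unfolding edges2_def card_2_iff by blast
    obtain w where w: "e = {u, w}" "w \<noteq> u" using pq u by blast
    have wV: "w \<in> V" using eV w(1) by blast
    have "f w \<noteq> c"
    proof
      assume "f w = c"
      hence "f w = f u" using assms(4) by simp
      from inj_onD[OF inj this wV assms(3)] w(2) show False by simp
    qed
    moreover have "f w \<in> V" using wV bij_betw_imp_surj_on[OF assms(1)] by blast
    moreover have "f ` e = {c, f w}" using w(1) assms(4) by simp
    ultimately show "f ` e \<in> star_edges V c" unfolding star_edges_def by blast
  }
qed

lemma wsum_star:
  assumes "finite V" "bij_betw f V V" "u \<in> V" "f u = c"
  shows "wsum V (wstar V f (indic V M) (indic V (star_edges V c)))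
       = int (card {e \<in> edges2 V. e \<in> M \<and> u \<in> e})"
proof -
  have "wsum V (wstar V f (indic V M) (indic V (star_edges V c)))
      = (\<Sum>e\<in>edges2 V. if e \<in> M \<and> u \<in> e then 1 else 0)"
    unfolding wsum_def
  proof (rule sum.cong[OF refl])
    fix e assume e: "e \<in> edges2 V"
    have "f ` e \<in> edges2 V" by (rule edge_img[OF assms(2) e])
    moreover have "f ` e \<in> star_edges V c \<longleftrightarrow> u \<in> e" by (rule star_iff[OF assms(2) e assms(3,4)])
    ultimately show "wstar V f (indic V M) (indic V (star_edges V c)) e = (if e \<in> M \<and> u \<in> e then 1 else 0)"
      using e unfolding wstar_def indic_def by simp
  qed
  also have "\<dots> = (\<Sum>e\<in>{e \<in> edges2 V. e \<in> M \<and> u \<in> e}. 1)"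
    using sum.inter_filter[OF finite_edges2[OF assms(1)], of "\<lambda>_. (1::int)"] by simp
  also have "\<dots> = int (card {e \<in> edges2 V. e \<in> M \<and> u \<in> e})" by simp
  finally show ?thesis .
qed


theorem mainTheorem9:
  fixes V :: "'a set" and E :: "'a set set" and k :: nat and e0 :: "'a set" and c :: 'a
  assumes "finite V" and "card V \<ge> 2"
    and "E \<subseteq> edges2 V"
    and "k \<ge> 1"
    and "e0 \<in> edges2 V"
    and "c \<in> V"
  shows "(\<exists>col. proper_edge_colouring E k col) \<longleftrightarrow>
    (let A = wpow_inf V {indic V (edges2 V - {e0})} \<union> {indic V (edges2 V)}
     in \<exists>H \<in> wstar_set V {indic V E} (Wk V A (k - 1)).
          \<forall>a \<in> {1..int k}.
            \<forall>x \<in> wsum V ` wstar_set V {indic V (U V a H)} {indic V (star_edges V c)}. x \<le> 1)"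
proof -
  define A where "A = wpow_inf V {indic V (edges2 V - {e0})} \<union> {indic V (edges2 V)}"
  have A_eq: "A = Pall V e0 \<union> {indic V (edges2 V)}"
    unfolding A_def wpow_inf_eq[OF assms(1,5)] ..
  have Aind: "\<forall>H\<in>A. \<exists>S. H = indic V S" unfolding A_eq Pall_def by blast
  have PA: "Pall V e0 \<subseteq> A" unfolding A_eq by blast
  have kk: "int (k - 1) + 1 = int k" using assms(4) by simp
  have "(\<exists>col. proper_edge_colouring E k col) \<longleftrightarrow>
     (\<exists>H \<in> wstar_set V {indic V E} (Wk V A (k - 1)).
          \<forall>a \<in> {1..int k}.
            \<forall>x \<in> wsum V ` wstar_set V {indic V (U V a H)} {indic V (star_edges V c)}. x \<le> 1)"
    (is "?L \<longleftrightarrow> ?Q")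
  proof
    assume ?L
    then obtain col where col: "proper_edge_colouring E k col" by blast
    hence colr: "\<forall>e\<in>E. col e \<in> {1..k}"
      and colp: "\<forall>e1\<in>E. \<forall>e2\<in>E. e1 \<noteq> e2 \<and> e1 \<inter> e2 \<noteq> {} \<longrightarrow> col e1 \<noteq> col e2"
      unfolding proper_edge_colouring_def by blast+
    define c1 where "c1 = (if e0 \<in> E then col e0 else 1)"
    have c1r: "c1 \<in> {1..k}"
    proof (cases "e0 \<in> E")
      case True then show ?thesis unfolding c1_def using colr by simp
    next
      case False then show ?thesis unfolding c1_def using assms(4) by simp
    qed
    define sg where "sg = (\<lambda>x::nat. if x = 1 then c1 else if x = c1 then 1 else x)"
    have sginv: "sg (sg x) = x" for x
    proof (cases "x = 1")
      case True then show ?thesis unfolding sg_def by simp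
    next
      case False
      show ?thesis
      proof (cases "x = c1")
        case True then show ?thesis using False unfolding sg_def by simp
      next
        case F2: False then show ?thesis using False unfolding sg_def by simp
      qed
    qed
    have sginj: "sg x = sg y \<Longrightarrow> x = y" for x y by (metis sginv)
    have sgr: "x \<in> {1..k} \<Longrightarrow> sg x \<in> {1..k}" for x using c1r unfolding sg_def by simp
    define col' where "col' = (\<lambda>e. sg (col e))"
    have col'r: "e \<in> E \<Longrightarrow> col' e \<in> {1..k}" for e unfolding col'_def using sgr colr by blast
    have col'p: "col' e1 \<noteq> col' e2" if "e1 \<in> E" "e2 \<in> E" "e1 \<noteq> e2" "e1 \<inter> e2 \<noteq> {}" for e1 e2
    proof
      assume "col' e1 = col' e2"
      hence "col e1 = col e2" unfolding col'_def by (rule sginj)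
      thus False using colp that by blast
    qed
    have col'e0: "col' e0 = 1" if "e0 \<in> E" unfolding col'_def sg_def c1_def using that by simp
    define T where "T = (\<lambda>e. if e \<in> E then int (col' e) else 1)"
    have Tr: "\<forall>e\<in>edges2 V. 1 \<le> T e \<and> T e \<le> int (k - 1) + 1"
    proof
      fix e assume "e \<in> edges2 V"
      show "1 \<le> T e \<and> T e \<le> int (k - 1) + 1"
      proof (cases "e \<in> E")
        case True
        then have "col' e \<in> {1..k}" by (rule col'r)
        then show ?thesis unfolding T_def kk using True by simp
      next
        case False then show ?thesis unfolding T_def kk using assms(4) by simp
      qed
    qed
    have T0: "T e0 = 1"
    proof (cases "e0 \<in> E")
      case True then show ?thesis unfolding T_def using col'e0 by simp
    next
      case False then show ?thesis unfolding T_def by simp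
    qed
    define W where "W = (\<lambda>e. if e \<in> edges2 V then T e else 0)"
    have WW: "W \<in> Wk V A (k - 1)" unfolding W_def by (rule Wk_exists[OF assms(5) PA Tr T0])
    define H where "H = wstar V id (indic V E) W"
    have bid: "bij_betw id V V" by simp
    have HS: "H \<in> wstar_set V {indic V E} (Wk V A (k - 1))"
      unfolding wstar_set_def H_def
      by (rule CollectI, rule exI[where x=id], rule exI[where x="indic V E"], rule exI[where x=W], intro conjI refl singletonI WW bid)
    have Hval: "H e = (if e \<in> E then int (col' e) else 0)" if "e \<in> edges2 V" for e
      using that assms(3) unfolding H_def wstar_def indic_def W_def T_def by auto
    show ?Q
    proof (rule bexI[OF _ HS], intro ballI)
      fix a x assume a: "a \<in> {1..int k}"
        and x: "x \<in> wsum V ` wstar_set V {indic V (U V a H)} {indic V (star_edges V c)}"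
      obtain g where g: "bij_betw g V V" "x = wsum V (wstar V g (indic V (U V a H)) (indic V (star_edges V c)))"
        using x unfolding wstar_set_def by blast
      have "c \<in> g ` V" using bij_betw_imp_surj_on[OF g(1)] assms(6) by simp
      then obtain u where u: "u \<in> V" "g u = c" by blast
      define S where "S = {e \<in> edges2 V. e \<in> U V a H \<and> u \<in> e}"
      have xe: "x = int (card S)" unfolding S_def g(2) by (rule wsum_star[OF assms(1) g(1) u])
      have finS: "finite S" unfolding S_def using finite_edges2[OF assms(1)] by simp
      have "\<forall>e1\<in>S. \<forall>e2\<in>S. e1 = e2"
      proof (intro ballI)
        fix e1 e2 assume e1: "e1 \<in> S" and e2: "e2 \<in> S"
        have p1: "e1 \<in> edges2 V" "H e1 = a" "u \<in> e1" using e1 unfolding S_def U_def by blast+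
        have p2: "e2 \<in> edges2 V" "H e2 = a" "u \<in> e2" using e2 unfolding S_def U_def by blast+
        have "a \<noteq> 0" using a by simp
        hence E1: "e1 \<in> E" "int (col' e1) = a" using Hval[OF p1(1)] p1(2) by (simp_all split: if_splits)
        have "a \<noteq> 0" using a by simp
        hence E2: "e2 \<in> E" "int (col' e2) = a" using Hval[OF p2(1)] p2(2) by (simp_all split: if_splits)
        show "e1 = e2"
        proof (rule ccontr)
          assume "e1 \<noteq> e2"
          moreover have "e1 \<inter> e2 \<noteq> {}" using p1(3) p2(3) by blast
          ultimately have "col' e1 \<noteq> col' e2" using col'p E1(1) E2(1) by blast
          thus False using E1(2) E2(2) by simp
        qed
      qed
      hence "card S \<le> 1" unfolding One_nat_def card_le_Suc0_iff_eq[OF finS] .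
      thus "x \<le> 1" unfolding xe by simp
    qed
  next
    assume ?Q
    then obtain H where HS: "H \<in> wstar_set V {indic V E} (Wk V A (k - 1))"
      and cond: "\<forall>a \<in> {1..int k}. \<forall>x \<in> wsum V ` wstar_set V {indic V (U V a H)} {indic V (star_edges V c)}. x \<le> 1"
      by blast
    obtain f W where HW: "H = wstar V f (indic V E) W" "W \<in> Wk V A (k - 1)" "bij_betw f V V"
      using HS unfolding wstar_set_def by blast
    have Hv: "1 \<le> H e \<and> H e \<le> int k" if "e \<in> E" for e
    proof -
      have e: "e \<in> edges2 V" using that assms(3) by blast
      have fe: "f ` e \<in> edges2 V" by (rule edge_img[OF HW(3) e])
      have "1 \<le> W (f ` e) \<and> W (f ` e) \<le> int (k - 1) + 1" by (rule Wk_vals[OF Aind HW(2) fe])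
      moreover have "H e = W (f ` e)" unfolding HW(1) wstar_def indic_def using e that by simp
      ultimately show ?thesis using kk by simp
    qed
    define col where "col = (\<lambda>e. nat (H e))"
    have icol: "int (col e) = H e" if "e \<in> E" for e unfolding col_def using Hv[OF that] by simp
    show ?L
    proof (rule exI[of _ col], unfold proper_edge_colouring_def, intro conjI ballI impI)
      fix e assume e: "e \<in> E"
      have "1 \<le> int (col e)" "int (col e) \<le> int k" using icol[OF e] Hv[OF e] by simp_all
      thus "col e \<in> {1..k}" by simp
    next
      fix e1 e2 assume e1: "e1 \<in> E" and e2: "e2 \<in> E" and ne: "e1 \<noteq> e2 \<and> e1 \<inter> e2 \<noteq> {}"
      show "col e1 \<noteq> col e2"
      proof
        assume eq: "col e1 = col e2"
        obtain x where x: "x \<in> e1" "x \<in> e2" using ne by blast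
        have xV: "x \<in> V" using assms(3) e1 x(1) unfolding edges2_def by blast
        define a where "a = H e1"
        have Ha: "H e2 = a" unfolding a_def using icol[OF e1] icol[OF e2] eq by simp
        have ar: "a \<in> {1..int k}" using Hv[OF e1] unfolding a_def by simp
        define g where "g = transpose x c"
        have gp: "g permutes V" unfolding g_def using xV assms(6) by (rule permutes_swap_id)
        hence gb: "bij_betw g V V" by (rule permutes_imp_bij)
        have gx: "g x = c" unfolding g_def by simp
        define S where "S = {e \<in> edges2 V. e \<in> U V a H \<and> x \<in> e}"
        have ws: "wsum V (wstar V g (indic V (U V a H)) (indic V (star_edges V c))) = int (card S)"
          unfolding S_def by (rule wsum_star[OF assms(1) gb xV gx])
        have "wstar V g (indic V (U V a H)) (indic V (star_edges V c))
              \<in> wstar_set V {indic V (U V a H)} {indic V (star_edges V c)}"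
          unfolding wstar_set_def
          by (rule CollectI, rule exI[where x=g], rule exI[where x="indic V (U V a H)"], rule exI[where x="indic V (star_edges V c)"], intro conjI refl singletonI gb)
        hence "int (card S) \<in> wsum V ` wstar_set V {indic V (U V a H)} {indic V (star_edges V c)}"
          unfolding ws[symmetric] by (rule imageI)
        hence le1: "int (card S) \<le> 1" using cond ar by blast
        have e1E: "e1 \<in> edges2 V" "e2 \<in> edges2 V" using e1 e2 assms(3) by blast+
        have "e1 \<in> S" unfolding S_def U_def a_def using e1E x by blast
        moreover have "e2 \<in> S" unfolding S_def U_def using e1E x Ha by blast
        ultimately have sub: "{e1, e2} \<subseteq> S" by blast
        have finS: "finite S" unfolding S_def using finite_edges2[OF assms(1)] by simp
        have "card {e1, e2} = 2" using ne by simp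
        hence "2 \<le> card S" using card_mono[OF finS sub] by simp
        thus False using le1 by simp
      qed
    qed
  qed
  then show ?thesis unfolding Let_def A_def[symmetric] .
qed

end
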